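(* Let $p,p'\ge1$ with $|p-p'|=1$ and let $X=\alpha_{(p,p')}(Y)$ where $Y=y_1y_2\cdots$ is a Sturmian word in which $bb$ does not occur. An occurrence of the letter $b$ in $X$ (as a palindrome center) is original if and only if it is the first letter $b$ of $\alpha(y_jy_{j+1})$ (i.e. the last letter of $\alpha(y_j)$) for some $j$ with $y_j\neq y_{j+1}$.
   Context: $\alpha_{(p,p')}$ is the morphism $a\mapsto a^pb$, $b\mapsto a^{p'}b$. A Sturmian word is a right-infinite aperiodic word over $\{a,b\}$ with exactly $n+1$ factors of each length $n$. A center occurrence in a word is an occurrence of one of the factors $a$, $b$, $aa$. Write $X=\alpha(y_1)\alpha(y_2)\cdots$, with $\alpha(y_j)$ occupying positions $s_j+1,\dots,s_j+|\alpha(y_j)|$, $s_j=\sum_{t<j}|\alpha(y_t)|$. Reflections: the reflection of an occurrence $y_j=a$ (resp. $b$) is the center (middle letter if odd length, middle two letters if even length) of the run $a^p$ (resp. $a^{p'}$) at positions $s_j+1,\dots,s_j+p$ (resp. $s_j+p'$); the reflection of an occurrence $y_jy_{j+1}=aa$ is the letter $b$ at position $s_j+p+1$. A center occurrence of $X$ is original if it is not the reflection of any center occurrence of $Y$. *)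

theory Defs
  imports Main
begin

datatype letter = A | B

(* infinite words are functions nat => letter, indexed from 0
   (index i corresponds to position i+1 of the paper) *)

definition factors :: "(nat \<Rightarrow> letter) \<Rightarrow> nat \<Rightarrow> letter list set" where
  "factors w n = {map w [i..<i+n] | i. True}"

definition ult_periodic :: "(nat \<Rightarrow> 'a) \<Rightarrow> bool" where
  "ult_periodic w \<longleftrightarrow> (\<exists>P>0. \<exists>N. \<forall>i\<ge>N. w (i + P) = w i)"

definition sturmian :: "(nat \<Rightarrow> letter) \<Rightarrow> bool" where
  "sturmian w \<longleftrightarrow> \<not> ult_periodic w \<and> (\<forall>n. card (factors w n) = n + 1)"

fun alpha :: "nat \<Rightarrow> nat \<Rightarrow> letter \<Rightarrow> letter list" where
  "alpha p p' A = replicate p A @ [B]"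
| "alpha p p' B = replicate p' A @ [B]"

(* s_j: alpha(y j) occupies indices spos f y j .. spos f y (Suc j) - 1 *)
definition spos :: "(letter \<Rightarrow> letter list) \<Rightarrow> (nat \<Rightarrow> letter) \<Rightarrow> nat \<Rightarrow> nat" where
  "spos f y j = (\<Sum>t<j. length (f (y t)))"

(* the infinite word f(y_0) f(y_1) ... (f assumed non-erasing) *)
definition morph_apply :: "(letter \<Rightarrow> letter list) \<Rightarrow> (nat \<Rightarrow> letter) \<Rightarrow> nat \<Rightarrow> letter" where
  "morph_apply f y i = (let j = (LEAST j. i < spos f y (Suc j)) in f (y j) ! (i - spos f y j))"

(* an occurrence is (start index, length); center occurrences are occurrences of a, b or aa *)
definition center_occ :: "(nat \<Rightarrow> letter) \<Rightarrow> nat \<times> nat \<Rightarrow> bool" where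
  "center_occ w c \<longleftrightarrow> (snd c = 1 \<or> (snd c = 2 \<and> w (fst c) = A \<and> w (Suc (fst c)) = A))"

definition run_center :: "nat \<Rightarrow> nat \<Rightarrow> nat \<times> nat" where
  "run_center s m = (if odd m then (s + m div 2, 1) else (s + m div 2 - 1, 2))"

(* d (occurrence in X = alpha(Y)) is the reflection of the center occurrence c of Y *)
definition is_reflection :: "nat \<Rightarrow> nat \<Rightarrow> (nat \<Rightarrow> letter) \<Rightarrow> nat \<times> nat \<Rightarrow> nat \<times> nat \<Rightarrow> bool" where
  "is_reflection p p' y c d \<longleftrightarrow> center_occ y c \<and>
     ((snd c = 1 \<and> d = run_center (spos (alpha p p') y (fst c)) (if y (fst c) = A then p else p'))
    \<or> (snd c = 2 \<and> d = (spos (alpha p p') y (fst c) + p, 1)))"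

definition original :: "nat \<Rightarrow> nat \<Rightarrow> (nat \<Rightarrow> letter) \<Rightarrow> nat \<times> nat \<Rightarrow> bool" where
  "original p p' y d \<longleftrightarrow> center_occ (morph_apply (alpha p p') y) d \<and>
     \<not> (\<exists>c. is_reflection p p' y c d)"

end

theory Submission
  imports Defs
begin

lemma len_alpha: "length (alpha p p' x) = Suc (if x = A then p else p')"
  by (cases x) auto

lemma spos_Suc: "spos f y (Suc j) = spos f y j + length (f (y j))"
  by (simp add: spos_def)

lemma spos_smono: "strict_mono (spos (alpha p p') y)"
  by (rule strict_mono_Suc_iff[THEN iffD2]) (simp add: spos_Suc len_alpha)

lemma spos_ge: "j \<le> spos (alpha p p') y j"
  using spos_smono strict_mono_imp_increasing by blast

lemma block_unique:
  assumes "spos (alpha p p') y j \<le> i" "i < spos (alpha p p') y (Suc j)"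
    "spos (alpha p p') y k \<le> i" "i < spos (alpha p p') y (Suc k)"
  shows "j = k"
proof (rule ccontr)
  assume "j \<noteq> k"
  then have "Suc j \<le> k \<or> Suc k \<le> j" by auto
  then show False
    using assms spos_smono[of p p' y] strict_mono_less_eq[of "spos (alpha p p') y"]
    by (metis leD le_trans)
qed

lemma morph_at:
  assumes "spos (alpha p p') y j \<le> i" "i < spos (alpha p p') y (Suc j)"
  shows "morph_apply (alpha p p') y i = alpha p p' (y j) ! (i - spos (alpha p p') y j)"
proof -
  have "(LEAST j. i < spos (alpha p p') y (Suc j)) = j"
  proof (rule Least_equality)
    show "i < spos (alpha p p') y (Suc j)" by fact
    fix j' assume "i < spos (alpha p p') y (Suc j')"
    show "j \<le> j'"
    proof (rule ccontr)
      assume "\<not> j \<le> j'"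
      then have "Suc j' \<le> j" by simp
      then have "spos (alpha p p') y (Suc j') \<le> spos (alpha p p') y j"
        using spos_smono[of p p' y] strict_mono_less_eq by blast
      then show False using assms \<open>i < spos (alpha p p') y (Suc j')\<close> by simp
    qed
  qed
  then show ?thesis by (simp add: morph_apply_def)
qed

lemma block_exists: "\<exists>j. spos (alpha p p') y j \<le> i \<and> i < spos (alpha p p') y (Suc j)"
proof -
  have ex: "\<exists>j. i < spos (alpha p p') y (Suc j)"
    using spos_ge[of "Suc i" p p' y] Suc_le_eq by blast
  define j where "j = (LEAST j. i < spos (alpha p p') y (Suc j))"
  have 1: "i < spos (alpha p p') y (Suc j)" unfolding j_def by (rule LeastI_ex[OF ex])
  have 2: "spos (alpha p p') y j \<le> i"
  proof (cases j)
    case 0 then show ?thesis by (simp add: spos_def)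
  next
    case (Suc k)
    have "\<not> i < spos (alpha p p') y (Suc k)"
      using not_less_Least[of k "\<lambda>j. i < spos (alpha p p') y (Suc j)"] Suc j_def by simp
    then show ?thesis using Suc by simp
  qed
  show ?thesis using 1 2 by blast
qed

lemma nth_block: "k < m \<Longrightarrow> (replicate m A @ [B]) ! k = A"
  by (simp add: nth_append)

theorem corollary1:
  fixes p p' :: nat and y :: "nat \<Rightarrow> letter" and i :: nat
  assumes "p \<ge> 1" and "p' \<ge> 1" and "p = p' + 1 \<or> p' = p + 1"
    and "sturmian y"
    and "\<not> (\<exists>j. y j = B \<and> y (Suc j) = B)"
    and "morph_apply (alpha p p') y i = B"
  shows "original p p' y (i, 1) \<longleftrightarrow>
         (\<exists>j. Suc i = spos (alpha p p') y (Suc j) \<and> y j \<noteq> y (Suc j))"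
proof -
  let ?s = "spos (alpha p p') y"
  let ?X = "morph_apply (alpha p p') y"
  have blk: "\<And>x. alpha p p' x = replicate (if x = A then p else p') A @ [B]"
    by (case_tac x) auto
  obtain j where j1: "?s j \<le> i" and j2: "i < ?s (Suc j)" using block_exists by blast
  have sj: "?s (Suc j) = ?s j + Suc (if y j = A then p else p')"
    by (simp add: spos_Suc len_alpha)
  have Si: "Suc i = ?s (Suc j)"
  proof (rule ccontr)
    assume "Suc i \<noteq> ?s (Suc j)"
    then have "i - ?s j < (if y j = A then p else p')" using j1 j2 sj by auto
    then have "?X i = A" using morph_at[OF j1 j2] blk nth_block by metis
    then show False using assms(6) by simp
  qed
  have uniq: "\<And>k. Suc i = ?s (Suc k) \<Longrightarrow> k = j"
    using Si spos_smono[of p p' y] strict_mono_eq by (metis Suc_inject)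
  have refl: "(\<exists>c. is_reflection p p' y c (i, 1)) \<longleftrightarrow> (y j = A \<and> y (Suc j) = A)"
  proof
    assume "\<exists>c. is_reflection p p' y c (i, 1)"
    then obtain c where c: "is_reflection p p' y c (i, 1)" by blast
    obtain k l where ck: "c = (k, l)" by (cases c)
    show "y j = A \<and> y (Suc j) = A"
    proof (cases "l = 1")
      case True
      let ?m = "if y k = A then p else p'"
      have rc: "(i, 1) = run_center (?s k) ?m" using c ck True by (simp add: is_reflection_def)
      then have odd: "odd ?m" and ii: "i = ?s k + ?m div 2"
        by (auto simp: run_center_def split: if_splits)
      have sk: "?s (Suc k) = ?s k + Suc ?m" by (simp add: spos_Suc len_alpha)
      have "?X i = alpha p p' (y k) ! (?m div 2)"
        using morph_at[of p p' y k i] ii sk by simp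
      also have "\<dots> = A" using blk nth_block odd by (metis div_less_dividend odd_pos one_less_numeral_iff semiring_norm(76))
      finally show ?thesis using assms(6) by simp
    next
      case False
      then have l2: "l = 2" and yk: "y k = A" "y (Suc k) = A" and ii: "i = ?s k + p"
        using c ck by (auto simp: is_reflection_def center_occ_def)
      have "Suc i = ?s (Suc k)" using ii yk by (simp add: spos_Suc len_alpha)
      then have "k = j" using uniq by blast
      then show ?thesis using yk by simp
    qed
  next
    assume h: "y j = A \<and> y (Suc j) = A"
    have "is_reflection p p' y (j, 2) (i, 1)"
      using h Si sj by (simp add: is_reflection_def center_occ_def)
    then show "\<exists>c. is_reflection p p' y c (i, 1)" by blast
  qed
  have "original p p' y (i, 1) \<longleftrightarrow> \<not> (y j = A \<and> y (Suc j) = A)"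
    using refl by (simp add: original_def center_occ_def)
  also have "\<dots> \<longleftrightarrow> y j \<noteq> y (Suc j)"
    using assms(5) by (cases "y j"; cases "y (Suc j)") auto
  also have "\<dots> \<longleftrightarrow> (\<exists>j. Suc i = ?s (Suc j) \<and> y j \<noteq> y (Suc j))"
    using Si uniq by blast
  finally show ?thesis .
qed

end
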